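(* There exist a CSS code $\mathcal C$ on $n$ qupits and a partition $\{1,\dots,n\}=A\sqcup B$ for which $ST_B(\mathcal C)\subsetneq \mathcal C_B$.
   Context: A qupit is $\mathbb{C}^p$, $p$ prime, with basis $\{|a\rangle:a\in\mathbb{Z}_p\}$, and $\mathcal F|a\rangle=\frac1{\sqrt p}\sum_be^{2\pi iab/p}|b\rangle$. For $U\le\mathbb{Z}_p^n$, $U^{(q)}=\mathrm{span}\{|\mathbf u\rangle:\mathbf u\in U\}$. A CSS code is $\mathcal C=V^{(q)}\cap\mathcal F^{\otimes n}W^{(q)}$ for linear codes $V,W\le\mathbb{Z}_p^n$ with $V^\perp\subseteq W$. For $B\subseteq\{1,\dots,n\}$, $V_B=\{\mathbf v:\exists\mathbf w\in V,\ \mathrm{supp}(\mathbf v-\mathbf w)\subseteq B\}$, $W_B$ is defined similarly, and $\mathcal C_B=V_B^{(q)}\cap\mathcal F^{\otimes n}W_B^{(q)}$. A mixed state $\rho'$ is "in" $\mathcal C$ if $\mathrm{Tr}(P_{\mathcal C}\rho')=1$. $ST_B(\mathcal C)=\{\rho:\exists\rho'\text{ in }\mathcal C,\ \mathrm{Tr}_B(\rho)=\mathrm{Tr}_B(\rho')\}$, where $\mathcal H=\mathcal H_A\otimes\mathcal H_B$ with $\mathcal H_A,\mathcal H_B$ the qupits in positions $A$ and $B$. *)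

theory Defs
  imports Complex_Main "HOL-Library.Complex_Order" "HOL-Computational_Algebra.Primes"
begin

text \<open>Qupit positions are indexed by 0..n-1 (standing for 1..n).  A basis string
  (element of Z_p^n) is a function nat => nat with values < p at positions < n
  and value 0 elsewhere.  Vectors of the Hilbert space (C^p)^{\<otimes> n} are
  functions from basis strings to complex numbers supported on the basis strings;
  operators are kernels (matrices) indexed by pairs of basis strings.\<close>

type_synonym bstr = "nat \<Rightarrow> nat"
type_synonym qvec = "bstr \<Rightarrow> complex"
type_synonym qop = "bstr \<Rightarrow> bstr \<Rightarrow> complex"

definition strs :: "nat \<Rightarrow> nat \<Rightarrow> bstr set" where
  "strs p n = {x. (\<forall>i<n. x i < p) \<and> (\<forall>i\<ge>n. x i = 0)}"

definition vadd :: "nat \<Rightarrow> bstr \<Rightarrow> bstr \<Rightarrow> bstr" where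
  "vadd p x y = (\<lambda>i. (x i + y i) mod p)"

definition smul :: "nat \<Rightarrow> nat \<Rightarrow> bstr \<Rightarrow> bstr" where
  "smul p c x = (\<lambda>i. (c * x i) mod p)"

definition lincode :: "nat \<Rightarrow> nat \<Rightarrow> bstr set \<Rightarrow> bool" where
  "lincode p n V \<longleftrightarrow> V \<subseteq> strs p n \<and> (\<lambda>i. 0) \<in> V \<and>
     (\<forall>x\<in>V. \<forall>y\<in>V. vadd p x y \<in> V) \<and> (\<forall>c<p. \<forall>x\<in>V. smul p c x \<in> V)"

definition dual :: "nat \<Rightarrow> nat \<Rightarrow> bstr set \<Rightarrow> bstr set" where
  "dual p n V = {w \<in> strs p n. \<forall>v\<in>V. (\<Sum>i<n. v i * w i) mod p = 0}"

definition extB :: "nat \<Rightarrow> nat \<Rightarrow> nat set \<Rightarrow> bstr set \<Rightarrow> bstr set" where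
  "extB p n B V = {v \<in> strs p n. \<exists>w\<in>V. \<forall>i<n. i \<notin> B \<longrightarrow> v i = w i}"

definition qspan :: "nat \<Rightarrow> nat \<Rightarrow> bstr set \<Rightarrow> qvec set" where
  "qspan p n U = {\<psi>. \<forall>x. x \<notin> U \<longrightarrow> \<psi> x = 0}"

definition qft :: "nat \<Rightarrow> nat \<Rightarrow> qvec \<Rightarrow> qvec" where
  "qft p n \<psi> = (\<lambda>y. if y \<in> strs p n then
      (\<Sum>x\<in>strs p n. \<psi> x * exp (2 * pi * \<i> * of_nat (\<Sum>i<n. x i * y i) / of_nat p))
        / (complex_of_real (sqrt (real p))) ^ n
    else 0)"

definition css :: "nat \<Rightarrow> nat \<Rightarrow> bstr set \<Rightarrow> bstr set \<Rightarrow> qvec set" where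
  "css p n V W = qspan p n V \<inter> qft p n ` qspan p n W"

definition css_B :: "nat \<Rightarrow> nat \<Rightarrow> nat set \<Rightarrow> bstr set \<Rightarrow> bstr set \<Rightarrow> qvec set" where
  "css_B p n B V W = css p n (extB p n B V) (extB p n B W)"

definition apply_op :: "nat \<Rightarrow> nat \<Rightarrow> qop \<Rightarrow> qvec \<Rightarrow> qvec" where
  "apply_op p n P \<psi> = (\<lambda>x. if x \<in> strs p n then (\<Sum>y\<in>strs p n. P x y * \<psi> y) else 0)"

definition supported_op :: "nat \<Rightarrow> nat \<Rightarrow> qop \<Rightarrow> bool" where
  "supported_op p n P \<longleftrightarrow> (\<forall>x y. x \<notin> strs p n \<or> y \<notin> strs p n \<longrightarrow> P x y = 0)"

definition is_proj_onto :: "nat \<Rightarrow> nat \<Rightarrow> qvec set \<Rightarrow> qop \<Rightarrow> bool" where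
  "is_proj_onto p n S P \<longleftrightarrow> supported_op p n P \<and>
     (\<forall>x y. P y x = cnj (P x y)) \<and>
     (\<forall>x\<in>strs p n. \<forall>y\<in>strs p n. (\<Sum>z\<in>strs p n. P x z * P z y) = P x y) \<and>
     (\<forall>\<psi>. apply_op p n P \<psi> \<in> S) \<and>
     (\<forall>\<psi>\<in>S. apply_op p n P \<psi> = \<psi>)"

definition tr :: "nat \<Rightarrow> nat \<Rightarrow> qop \<Rightarrow> complex" where
  "tr p n \<rho> = (\<Sum>x\<in>strs p n. \<rho> x x)"

definition mult_op :: "nat \<Rightarrow> nat \<Rightarrow> qop \<Rightarrow> qop \<Rightarrow> qop" where
  "mult_op p n P Q = (\<lambda>x y. \<Sum>z\<in>strs p n. P x z * Q z y)"

definition density :: "nat \<Rightarrow> nat \<Rightarrow> qop \<Rightarrow> bool" where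
  "density p n \<rho> \<longleftrightarrow> supported_op p n \<rho> \<and>
     (\<forall>v. 0 \<le> (\<Sum>x\<in>strs p n. \<Sum>y\<in>strs p n. cnj (v x) * \<rho> x y * v y)) \<and>
     tr p n \<rho> = 1"

definition state_in :: "nat \<Rightarrow> nat \<Rightarrow> qvec set \<Rightarrow> qop \<Rightarrow> bool" where
  "state_in p n S \<rho> \<longleftrightarrow> density p n \<rho> \<and>
     (\<exists>P. is_proj_onto p n S P \<and> tr p n (mult_op p n P \<rho>) = 1)"

text \<open>Partial trace over the qupits in B: the result is indexed by strings, but only
  depends on their restriction to the complementary positions A.\<close>
definition merge :: "nat set \<Rightarrow> bstr \<Rightarrow> bstr \<Rightarrow> bstr" where
  "merge B x b = (\<lambda>i. if i \<in> B then b i else x i)"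

definition ptrace :: "nat \<Rightarrow> nat \<Rightarrow> nat set \<Rightarrow> qop \<Rightarrow> qop" where
  "ptrace p n B \<rho> = (\<lambda>x y. if x \<in> strs p n \<and> y \<in> strs p n then
      (\<Sum>b\<in>{b \<in> strs p n. \<forall>i. i \<notin> B \<longrightarrow> b i = 0}. \<rho> (merge B x b) (merge B y b))
    else 0)"

definition ST :: "nat \<Rightarrow> nat \<Rightarrow> nat set \<Rightarrow> bstr set \<Rightarrow> bstr set \<Rightarrow> qop set" where
  "ST p n B V W = {\<rho>. density p n \<rho> \<and>
     (\<exists>\<rho>'. state_in p n (css p n V W) \<rho>' \<and> ptrace p n B \<rho> = ptrace p n B \<rho>')}"

end

theory Submission
  imports Defs
begin

definition e :: "nat \<Rightarrow> nat \<Rightarrow> bstr" where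
  "e a b = (\<lambda>i. if i = 0 then a else if i = 1 then b else 0)"

lemma e_eq[simp]: "(e a b = e c d) \<longleftrightarrow> a = c \<and> b = d"
  by (auto simp: e_def fun_eq_iff)

lemma e_app[simp]: "e a b 0 = a" "e a b (Suc 0) = b" "e a b (Suc (Suc i)) = 0"
  by (auto simp: e_def)

lemma strs22: "strs 2 2 = {e 0 0, e 0 1, e 1 0, e 1 1}"
proof (rule set_eqI, rule iffI)
  fix x assume "x \<in> strs 2 2"
  then have h: "x 0 < 2" "x 1 < 2" "\<And>i. i \<ge> 2 \<Longrightarrow> x i = 0" by (auto simp: strs_def)
  have "x = e (x 0) (x 1)" using h(3) by (auto simp: e_def fun_eq_iff)
  moreover have "x 0 = 0 \<or> x 0 = 1" "x 1 = 0 \<or> x 1 = 1" using h(1,2) by auto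
  ultimately show "x \<in> {e 0 0, e 0 1, e 1 0, e 1 1}" by auto
next
  fix x assume "x \<in> {e 0 0, e 0 1, e 1 0, e 1 1}"
  then show "x \<in> strs 2 2" by (auto simp: strs_def e_def)
qed

lemma finite_strs[simp]: "finite (strs 2 2)"
  by (simp add: strs22)

lemma e_in_strs[simp]: "a < 2 \<Longrightarrow> b < 2 \<Longrightarrow> e a b \<in> strs 2 2"
  by (auto simp: strs_def e_def)

lemma sum_strs: "sum f (strs 2 2) = f (e 0 0) + f (e 0 1) + f (e 1 0) + f (e 1 1)"
  unfolding strs22 by (simp add: algebra_simps)

lemma exp_half: "exp (2 * pi * \<i> * of_nat k / of_nat 2) = (-1::complex) ^ k"
proof -
  have "2 * pi * \<i> * of_nat k / of_nat 2 = of_nat k * (of_real pi * \<i>)" by simp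
  then show ?thesis by (simp only: exp_of_nat_mult exp_pi_i)
qed

lemma sqrt2c: "(complex_of_real (sqrt (real 2))) ^ 2 = 2"
  by (metis of_real_numeral of_real_power of_nat_numeral real_sqrt_pow2 zero_le_numeral)

lemma sqrt2c': "(complex_of_real (sqrt 2)) ^ 2 = 2"
  using sqrt2c by simp

lemma qft_e: "c < 2 \<Longrightarrow> d < 2 \<Longrightarrow> qft 2 2 \<psi> (e c d) =
   (\<psi> (e 0 0) + \<psi> (e 0 1) * (-1)^d + \<psi> (e 1 0) * (-1)^c + \<psi> (e 1 1) * (-1)^(c+d)) / 2"
proof -
  have ip: "(\<Sum>i<2. x i * e c d i) = x 0 * c + x 1 * d" for x
    by (simp add: numeral_2_eq_2)
  assume "c < 2" "d < 2"
  then have "qft 2 2 \<psi> (e c d) = (\<Sum>x\<in>strs 2 2. \<psi> x * exp (2 * pi * \<i> * of_nat (x 0 * c + x 1 * d) / of_nat 2)) / 2"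
    unfolding qft_def ip by (simp add: sqrt2c' del: of_nat_add of_nat_mult)
  also have "\<dots> = (\<psi> (e 0 0) + \<psi> (e 0 1) * (-1)^d + \<psi> (e 1 0) * (-1)^c + \<psi> (e 1 1) * (-1)^(c+d)) / 2"
    unfolding sum_strs exp_half by simp
  finally show ?thesis .
qed


lemma qft_out: "y \<notin> strs 2 2 \<Longrightarrow> qft 2 2 \<psi> y = 0"
  by (simp add: qft_def)

lemma qft_qft: "\<phi> \<in> qspan 2 2 (strs 2 2) \<Longrightarrow> qft 2 2 (qft 2 2 \<phi>) = \<phi>"
proof (rule ext)
  fix y assume h: "\<phi> \<in> qspan 2 2 (strs 2 2)"
  show "qft 2 2 (qft 2 2 \<phi>) y = \<phi> y"
  proof (cases "y \<in> strs 2 2")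
    case True
    then show ?thesis unfolding strs22
      by (auto simp: qft_e field_simps)
  next
    case False
    then show ?thesis using h by (simp add: qft_out qspan_def)
  qed
qed

lemma qft_img: "qft 2 2 ` qspan 2 2 (strs 2 2) = qspan 2 2 (strs 2 2)"
proof
  show "qft 2 2 ` qspan 2 2 (strs 2 2) \<subseteq> qspan 2 2 (strs 2 2)"
    by (auto simp: qspan_def qft_out)
  show "qspan 2 2 (strs 2 2) \<subseteq> qft 2 2 ` qspan 2 2 (strs 2 2)"
  proof
    fix \<phi> assume h: "\<phi> \<in> qspan 2 2 (strs 2 2)"
    have "qft 2 2 \<phi> \<in> qspan 2 2 (strs 2 2)" by (auto simp: qspan_def qft_out)
    then show "\<phi> \<in> qft 2 2 ` qspan 2 2 (strs 2 2)" using qft_qft[OF h] by (metis image_eqI)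
  qed
qed

definition VV :: "bstr set" where "VV = {e 0 0, e 1 1}"

lemma extB_VV: "extB 2 2 {1} VV = strs 2 2"
proof (rule set_eqI, rule iffI)
  fix v assume "v \<in> strs 2 2"
  then have "v \<in> {e 0 0, e 0 1, e 1 0, e 1 1}" by (simp add: strs22)
  then show "v \<in> extB 2 2 {1} VV"
    unfolding extB_def VV_def by (auto simp: strs22 e_def)
qed (simp add: extB_def)

lemma cssB: "css_B 2 2 {1} VV VV = qspan 2 2 (strs 2 2)"
  unfolding css_B_def css_def extB_VV qft_img by simp

lemma ifm: "(if P then 1 else 0) * (a::complex) = (if P then a else 0)"
  "a * (if P then 1 else 0) = (if P then a else 0)"
  "(if P \<and> Q then 1 else 0) * (a::complex) = (if P then if Q then a else 0 else 0)"
  by auto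

definition Idop :: qop where "Idop = (\<lambda>x y. if x \<in> strs 2 2 \<and> x = y then 1 else 0)"

lemma apply_Id: "apply_op 2 2 Idop \<psi> = (\<lambda>x. if x \<in> strs 2 2 then \<psi> x else 0)"
  by (rule ext) (auto simp: apply_op_def Idop_def ifm sum.delta sum.delta')

lemma Id_proj: "is_proj_onto 2 2 (qspan 2 2 (strs 2 2)) Idop"
  unfolding is_proj_onto_def
proof (intro conjI allI ballI)
  show "supported_op 2 2 Idop" by (auto simp: supported_op_def Idop_def)
next
  fix x y show "Idop y x = cnj (Idop x y)" by (auto simp: Idop_def)
next
  fix x y assume "x \<in> strs 2 2" "y \<in> strs 2 2"
  then show "(\<Sum>z\<in>strs 2 2. Idop x z * Idop z y) = Idop x y"
    by (auto simp: Idop_def ifm sum.delta sum.delta')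
next
  fix \<psi> show "apply_op 2 2 Idop \<psi> \<in> qspan 2 2 (strs 2 2)"
    by (auto simp: apply_Id qspan_def)
next
  fix \<psi> assume "\<psi> \<in> qspan 2 2 (strs 2 2)"
  then show "apply_op 2 2 Idop \<psi> = \<psi>"
    by (auto simp: apply_Id qspan_def)
qed

lemma density_in_cssB: "density 2 2 \<rho> \<Longrightarrow> state_in 2 2 (css_B 2 2 {1} VV VV) \<rho>"
  unfolding state_in_def cssB
proof (intro conjI exI[of _ Idop])
  assume d: "density 2 2 \<rho>"
  show "is_proj_onto 2 2 (qspan 2 2 (strs 2 2)) Idop" by (rule Id_proj)
  have "tr 2 2 (mult_op 2 2 Idop \<rho>) = tr 2 2 \<rho>"
    by (auto simp: tr_def mult_op_def Idop_def ifm sum.delta sum.delta' cong: sum.cong)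
  then show "tr 2 2 (mult_op 2 2 Idop \<rho>) = 1" using d by (simp add: density_def)
qed


lemma col_facts:
  assumes "f \<in> css 2 2 VV VV"
  shows "f (e 0 1) = 0 \<and> f (e 1 0) = 0 \<and> f (e 0 0) = f (e 1 1)"
proof -
  have q: "f \<in> qspan 2 2 VV" and "f \<in> qft 2 2 ` qspan 2 2 VV" using assms by (auto simp: css_def)
  then obtain \<psi> where psi: "\<psi> \<in> qspan 2 2 VV" "f = qft 2 2 \<psi>" by auto
  have "\<psi> (e 0 1) = 0" "\<psi> (e 1 0) = 0" using psi(1) by (auto simp: qspan_def VV_def)
  then have "f (e 0 0) = f (e 1 1)" using psi(2) by (simp add: qft_e)
  moreover have "f (e 0 1) = 0" "f (e 1 0) = 0" using q by (auto simp: qspan_def VV_def)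
  ultimately show ?thesis by simp
qed

definition Phi :: qvec where "Phi = (\<lambda>x. if x = e 0 0 \<or> x = e 1 1 then 1 else 0)"

lemma Phi_css: "Phi \<in> css 2 2 VV VV"
proof -
  have q: "Phi \<in> qspan 2 2 VV" by (auto simp: qspan_def VV_def Phi_def)
  have "qft 2 2 Phi = Phi"
  proof
    fix y show "qft 2 2 Phi y = Phi y"
    proof (cases "y \<in> strs 2 2")
      case True
      then show ?thesis unfolding strs22 by (auto simp: qft_e Phi_def)
    next
      case False
      then have "y \<noteq> e 0 0" "y \<noteq> e 1 1" by auto
      then show ?thesis using False by (simp add: qft_out Phi_def)
    qed
  qed
  then show ?thesis using q unfolding css_def by (metis IntI image_eqI)
qed

lemma apply_delta: "y \<in> strs 2 2 \<Longrightarrow>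
  apply_op 2 2 P (\<lambda>z. if z = y then 1 else 0) = (\<lambda>x. if x \<in> strs 2 2 then P x y else 0)"
  by (rule ext) (simp add: apply_op_def ifm sum.delta sum.delta')

lemma cnj_if: "cnj (if P then 1 else 0) = (if P then 1 else 0)" by simp

lemma diag_nonneg:
  assumes "density 2 2 \<rho>" "x \<in> strs 2 2"
  shows "0 \<le> \<rho> x x"
proof -
  have all: "\<forall>v. 0 \<le> (\<Sum>a\<in>strs 2 2. \<Sum>b\<in>strs 2 2. cnj (v a) * \<rho> a b * v b)"
    using assms(1) unfolding density_def by blast
  have "0 \<le> (\<Sum>a\<in>strs 2 2. \<Sum>b\<in>strs 2 2. cnj ((\<lambda>z. if z = x then 1 else 0) a) * \<rho> a b * (\<lambda>z. if z = x then 1 else 0) b)"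
    by (rule all[THEN spec])
  also have "\<dots> = \<rho> x x" using assms(2)
    by (simp add: ifm sum.delta sum.delta' cnj_if)
  finally show ?thesis .
qed

lemma rho0_density: "density 2 2 (\<lambda>x y. if x = e 0 0 \<and> y = e 0 0 then 1 else 0)"
  unfolding density_def
proof (intro conjI allI)
  show "supported_op 2 2 (\<lambda>x y. if x = e 0 0 \<and> y = e 0 0 then 1 else 0)"
    by (auto simp: supported_op_def)
  show "tr 2 2 (\<lambda>x y. if x = e 0 0 \<and> y = e 0 0 then 1 else 0) = 1"
    by (simp add: tr_def sum_strs)
  fix v :: qvec
  have "(\<Sum>x\<in>strs 2 2. \<Sum>y\<in>strs 2 2. cnj (v x) * (if x = e 0 0 \<and> y = e 0 0 then 1 else 0) * v y)
      = v (e 0 0) * cnj (v (e 0 0))"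
    by (simp add: sum_strs)
  also have "\<dots> = complex_of_real ((Re (v (e 0 0)))\<^sup>2 + (Im (v (e 0 0)))\<^sup>2)"
    by (rule complex_mult_cnj)
  also have "0 \<le> \<dots>" by (simp add: less_eq_complex_def)
  finally show "0 \<le> (\<Sum>x\<in>strs 2 2. \<Sum>y\<in>strs 2 2. cnj (v x) * (if x = e 0 0 \<and> y = e 0 0 then 1 else 0) * v y)" .
qed

lemma bset: "{b \<in> strs 2 2. \<forall>i. i \<notin> {1} \<longrightarrow> b i = 0} = {e 0 0, e 0 1}"
proof (rule set_eqI, rule iffI)
  fix b assume h: "b \<in> {b \<in> strs 2 2. \<forall>i. i \<notin> {1} \<longrightarrow> b i = 0}"
  then have "b 0 = 0" by auto
  with h show "b \<in> {e 0 0, e 0 1}" by (auto simp: strs22)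
next
  fix b assume "b \<in> {e 0 0, e 0 1}"
  then show "b \<in> {b \<in> strs 2 2. \<forall>i. i \<notin> {1} \<longrightarrow> b i = 0}" by (auto simp: e_def strs_def)
qed

lemma ptrace10: "ptrace 2 2 {1} \<rho> (e 1 0) (e 1 0) = \<rho> (e 1 0) (e 1 0) + \<rho> (e 1 1) (e 1 1)"
proof -
  have m: "merge {1} (e 1 0) (e 0 0) = e 1 0" "merge {1} (e 1 0) (e 0 1) = e 1 1"
    by (auto simp: merge_def e_def fun_eq_iff)
  show ?thesis unfolding ptrace_def bset using m by simp
qed


lemma not_ST: "(\<lambda>x y. if x = e 0 0 \<and> y = e 0 0 then 1 else 0) \<notin> ST 2 2 {1} VV VV"
proof
  define \<rho>0 :: qop where "\<rho>0 = (\<lambda>x y. if x = e 0 0 \<and> y = e 0 0 then 1 else 0)"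
  assume "(\<lambda>x y. if x = e 0 0 \<and> y = e 0 0 then 1 else 0) \<in> ST 2 2 {1} VV VV"
  then obtain \<rho> where st: "state_in 2 2 (css 2 2 VV VV) \<rho>"
    and pt: "ptrace 2 2 {1} \<rho>0 = ptrace 2 2 {1} \<rho>"
    unfolding ST_def \<rho>0_def by auto
  from st obtain P where d: "density 2 2 \<rho>" and pr: "is_proj_onto 2 2 (css 2 2 VV VV) P"
    and t1: "tr 2 2 (mult_op 2 2 P \<rho>) = 1" unfolding state_in_def by auto
  have herm: "\<And>x y. P y x = cnj (P x y)" and img: "\<And>\<psi>. apply_op 2 2 P \<psi> \<in> css 2 2 VV VV"
    and fix1: "\<And>\<psi>. \<psi> \<in> css 2 2 VV VV \<Longrightarrow> apply_op 2 2 P \<psi> = \<psi>"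
    using pr unfolding is_proj_onto_def by blast+
  have col: "P (e 0 1) y = 0 \<and> P (e 1 0) y = 0 \<and> P (e 0 0) y = P (e 1 1) y" if "y \<in> strs 2 2" for y
  proof -
    have "(\<lambda>x. if x \<in> strs 2 2 then P x y else 0) \<in> css 2 2 VV VV"
      using img[of "\<lambda>z. if z = y then 1 else 0"] apply_delta[OF that] by simp
    from col_facts[OF this] show ?thesis by simp
  qed
  have row: "P y (e 0 1) = 0 \<and> P y (e 1 0) = 0 \<and> P y (e 0 0) = cnj (P (e 0 0) y) \<and> P y (e 1 1) = cnj (P (e 0 0) y)"
    if "y \<in> strs 2 2" for y
    using col[OF that] herm[of "e 0 1" y] herm[of "e 1 0" y] herm[of "e 0 0" y] herm[of "e 1 1" y] by simp
  have fx: "apply_op 2 2 P Phi (e 0 0) = Phi (e 0 0)" using fix1[OF Phi_css] by simp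
  then have "P (e 0 0) (e 0 0) + P (e 0 0) (e 1 1) = 1"
    by (simp add: apply_op_def sum_strs Phi_def)
  moreover have "P (e 0 0) (e 1 1) = P (e 0 0) (e 0 0)"
    using row[of "e 0 0"] herm[of "e 0 0" "e 0 0", symmetric] by simp
  ultimately have c: "P (e 0 0) (e 0 0) = 1/2" by (simp add: field_simps)
  have c2a: "P (e 0 0) (e 1 1) = 1/2"
    using row[of "e 0 0"] herm[of "e 0 0" "e 0 0", symmetric] c by simp
  have c2: "P (e 0 0) (e 1 1) = 1/2" "P (e 1 1) (e 0 0) = 1/2" "P (e 1 1) (e 1 1) = 1/2"
    using c2a apply simp
    using col[of "e 0 0"] c apply simp
    using col[of "e 1 1"] c2a by simp
  have z: "P (e 0 1) y = 0" "P (e 1 0) y = 0" "P y (e 0 1) = 0" "P y (e 1 0) = 0" if "y \<in> strs 2 2" for y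
    using col[OF that] row[OF that] by auto
  have "tr 2 2 (mult_op 2 2 P \<rho>) = (\<rho> (e 0 0) (e 0 0) + \<rho> (e 1 1) (e 0 0) + \<rho> (e 0 0) (e 1 1) + \<rho> (e 1 1) (e 1 1)) / 2"
  proof -
    have zz: "P (e 0 (Suc 0)) y = 0" "P (e (Suc 0) 0) y = 0" "P y (e 0 (Suc 0)) = 0" "P y (e (Suc 0) 0) = 0"
      if "y \<in> strs 2 2" for y using z[OF that] by simp_all
    have cc: "P (e 0 0) (e 0 0) = 1/2" "P (e 0 0) (e (Suc 0) (Suc 0)) = 1/2"
      "P (e (Suc 0) (Suc 0)) (e 0 0) = 1/2" "P (e (Suc 0) (Suc 0)) (e (Suc 0) (Suc 0)) = 1/2"
      using c c2 by simp_all
    show ?thesis unfolding tr_def mult_op_def sum_strs by (simp add: zz cc add_divide_distrib)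
  qed
  with t1 have "\<rho> (e 0 0) (e 0 0) + \<rho> (e 1 1) (e 0 0) + \<rho> (e 0 0) (e 1 1) + \<rho> (e 1 1) (e 1 1) = 2"
    by simp
  then have T: "Re (\<rho> (e 0 0) (e 0 0)) + Re (\<rho> (e 1 1) (e 0 0)) + Re (\<rho> (e 0 0) (e 1 1)) + Re (\<rho> (e 1 1) (e 1 1)) = 2"
    by (metis one_complex.sel(1) plus_complex.sel(1) numeral_One one_add_one)
  have tr1: "Re (\<rho> (e 0 0) (e 0 0)) + Re (\<rho> (e 0 1) (e 0 1)) + Re (\<rho> (e 1 0) (e 1 0)) + Re (\<rho> (e 1 1) (e 1 1)) = 1"
    using d unfolding density_def tr_def sum_strs by (metis one_complex.sel(1) plus_complex.sel(1))
  have nn: "Re (\<rho> x x) \<ge> 0" if "x \<in> strs 2 2" for x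
    using diag_nonneg[OF d that] by (simp add: less_eq_complex_def)
  have "ptrace 2 2 {1} \<rho>0 (e 1 0) (e 1 0) = 0" unfolding ptrace10 \<rho>0_def by simp
  then have "\<rho> (e 1 0) (e 1 0) + \<rho> (e 1 1) (e 1 1) = 0" using pt ptrace10 by metis
  then have pz: "Re (\<rho> (e 1 0) (e 1 0)) + Re (\<rho> (e 1 1) (e 1 1)) = 0"
    by (metis plus_complex.sel(1) zero_complex.sel(1))
  have all: "\<forall>v. 0 \<le> (\<Sum>a\<in>strs 2 2. \<Sum>b\<in>strs 2 2. cnj (v a) * \<rho> a b * v b)"
    using d unfolding density_def by blast
  have "0 \<le> (\<Sum>a\<in>strs 2 2. \<Sum>b\<in>strs 2 2. cnj ((\<lambda>z. if z = e 0 0 then 1 else if z = e 1 1 then -2 else 0) a) * \<rho> a b * (\<lambda>z. if z = e 0 0 then 1 else if z = e 1 1 then -2 else 0) b)"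
    by (rule all[THEN spec])
  also have "\<dots> = \<rho> (e 0 0) (e 0 0) - 2 * \<rho> (e 0 0) (e 1 1) - 2 * \<rho> (e 1 1) (e 0 0) + 4 * \<rho> (e 1 1) (e 1 1)"
    by (simp add: sum_strs)
  finally have "0 \<le> Re (\<rho> (e 0 0) (e 0 0)) - 2 * Re (\<rho> (e 0 0) (e 1 1)) - 2 * Re (\<rho> (e 1 1) (e 0 0)) + 4 * Re (\<rho> (e 1 1) (e 1 1))"
    by (simp add: less_eq_complex_def)
  moreover note nn[of "e 0 0"] nn[of "e 0 1"] nn[of "e 1 0"] nn[of "e 1 1"]
  ultimately show False using T tr1 pz by simp
qed

lemma lincode_VV: "lincode 2 2 VV"
  unfolding lincode_def
proof (intro conjI ballI allI impI)
  show "VV \<subseteq> strs 2 2" by (auto simp: VV_def)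
  show "(\<lambda>i. 0) \<in> VV" by (auto simp: VV_def e_def fun_eq_iff)
  have va: "vadd 2 (e a b) (e c d) = e ((a+c) mod 2) ((b+d) mod 2)" for a b c d
    by (auto simp: vadd_def e_def fun_eq_iff)
  have sm: "smul 2 k (e a b) = e ((k*a) mod 2) ((k*b) mod 2)" for k a b
    by (auto simp: smul_def e_def fun_eq_iff)
  fix x y assume "x \<in> VV" "y \<in> VV"
  then show "vadd 2 x y \<in> VV" by (auto simp: VV_def va)
next
  fix c x assume "c < (2::nat)" "x \<in> VV"
  moreover have "smul 2 k (e a b) = e ((k*a) mod 2) ((k*b) mod 2)" for k a b
    by (auto simp: smul_def e_def fun_eq_iff)
  moreover have "c = 0 \<or> c = 1" using \<open>c < 2\<close> by auto
  ultimately show "smul 2 c x \<in> VV" by (auto simp: VV_def)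
qed

lemma dual_VV: "dual 2 2 VV \<subseteq> VV"
proof
  fix w assume "w \<in> dual 2 2 VV"
  then have w: "w \<in> strs 2 2" "(\<Sum>i<2. e 1 1 i * w i) mod 2 = 0" by (auto simp: dual_def VV_def)
  then have "(w 0 + w 1) mod 2 = 0" by (simp add: numeral_2_eq_2)
  with w(1) show "w \<in> VV" unfolding strs22 VV_def by auto
qed

theorem mainTheorem10:
  shows "\<exists>(p::nat) (n::nat) V W (A::nat set) (B::nat set).
    prime p \<and> lincode p n V \<and> lincode p n W \<and> dual p n V \<subseteq> W \<and>
    A \<union> B = {..<n} \<and> A \<inter> B = {} \<and>
    ST p n B V W \<subset> {\<rho>. state_in p n (css_B p n B V W) \<rho>}"
proof (intro exI conjI)
  show "prime (2::nat)" by simp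
  show "lincode 2 2 VV" by (rule lincode_VV)
  show "lincode 2 2 VV" by (rule lincode_VV)
  show "dual 2 2 VV \<subseteq> VV" by (rule dual_VV)
  show "{0} \<union> {1} = {..<2::nat}" by auto
  show "{0} \<inter> {1::nat} = {}" by auto
  show "ST 2 2 {1} VV VV \<subset> {\<rho>. state_in 2 2 (css_B 2 2 {1} VV VV) \<rho>}"
  proof
    show "ST 2 2 {1} VV VV \<subseteq> {\<rho>. state_in 2 2 (css_B 2 2 {1} VV VV) \<rho>}"
      unfolding ST_def using density_in_cssB by blast
    show "ST 2 2 {1} VV VV \<noteq> {\<rho>. state_in 2 2 (css_B 2 2 {1} VV VV) \<rho>}"
      using not_ST density_in_cssB[OF rho0_density] by blast
  qed
qed

end
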